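(* Let $\mathcal{C}_0\subseteq\mathbb{F}_2^n$ be a code with $|\mathcal{C}_0|\ge 2$ and minimum distance $d$, let $t=\lfloor (d-1)/2\rfloor$, and let $\varepsilon>0$. Let $\rho$ be a pmf on $\mathbb{F}_2^n$ such that $d_{TV}(P_{\mathcal{C}_0}\ast\rho,P_{U_n})\le\varepsilon$. Then $$\sum_{x:|x|\le t}\rho(x)\le\frac{|\mathcal{C}_0|V_n(t)}{2^n}+\varepsilon\qquad\text{and}\qquad\sum_{x:|x|\ge n-t}\rho(x)\le\frac{|\mathcal{C}_0|V_n(t)}{2^n}+\varepsilon.$$
   Context: $|x|$ is the Hamming weight of $x\in\mathbb{F}_2^n$. $P_{\mathcal{C}_0}$ is the uniform pmf on $\mathcal{C}_0$, $P_{U_n}$ the uniform pmf on $\mathbb{F}_2^n$. Convolution: $(f\ast g)(x)=\sum_{y\in\mathbb{F}_2^n}f(y)g(x-y)$. $V_n(t)=\sum_{j=0}^t\binom nj$ is the size of a Hamming ball of radius $t$. The total variation distance is $d_{TV}(P,Q)=\max_{A}|P(A)-Q(A)|=\frac12\sum_x|P(x)-Q(x)|$. *)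

theory Defs
  imports Complex_Main
begin

text \<open>Vectors of F_2^n are represented as boolean lists of length n (True = 1).\<close>

definition F2n :: "nat \<Rightarrow> bool list set" where
  "F2n n = {x. length x = n}"

text \<open>Addition in F_2^n (componentwise XOR); in characteristic 2, x - y = x + y.\<close>
definition vadd :: "bool list \<Rightarrow> bool list \<Rightarrow> bool list" where
  "vadd x y = map2 (\<lambda>a b. a \<noteq> b) x y"

definition hw :: "bool list \<Rightarrow> nat" where
  "hw x = length (filter id x)"

definition hdist :: "bool list \<Rightarrow> bool list \<Rightarrow> nat" where
  "hdist x y = hw (vadd x y)"

definition min_dist :: "bool list set \<Rightarrow> nat" where
  "min_dist C = Min {hdist x y | x y. x \<in> C \<and> y \<in> C \<and> x \<noteq> y}"

definition ball_vol :: "nat \<Rightarrow> nat \<Rightarrow> nat" where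
  "ball_vol n t = (\<Sum>j\<le>t. n choose j)"

definition is_pmf :: "nat \<Rightarrow> (bool list \<Rightarrow> real) \<Rightarrow> bool" where
  "is_pmf n p \<longleftrightarrow> (\<forall>x\<in>F2n n. p x \<ge> 0) \<and> (\<Sum>x\<in>F2n n. p x) = 1"

definition unif_code :: "bool list set \<Rightarrow> bool list \<Rightarrow> real" where
  "unif_code C x = (if x \<in> C then 1 / real (card C) else 0)"

definition unif :: "nat \<Rightarrow> bool list \<Rightarrow> real" where
  "unif n x = 1 / 2 ^ n"

definition conv :: "nat \<Rightarrow> (bool list \<Rightarrow> real) \<Rightarrow> (bool list \<Rightarrow> real) \<Rightarrow> bool list \<Rightarrow> real" where
  "conv n f g x = (\<Sum>y\<in>F2n n. f y * g (vadd x y))"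

definition dTV :: "nat \<Rightarrow> (bool list \<Rightarrow> real) \<Rightarrow> (bool list \<Rightarrow> real) \<Rightarrow> real" where
  "dTV n P Q = (1/2) * (\<Sum>x\<in>F2n n. \<bar>P x - Q x\<bar>)"

end

theory Submission
  imports Defs
begin

lemma F2n_eq: "F2n n = {xs. set xs \<subseteq> UNIV \<and> length xs = n}"
  by (simp add: F2n_def)

lemma finite_F2n: "finite (F2n n)"
  unfolding F2n_eq by (rule finite_lists_length_eq) simp

lemma card_F2n: "card (F2n n) = 2 ^ n"
  unfolding F2n_eq by (subst card_lists_length_eq) auto

lemma length_vadd[simp]: "length (vadd x y) = min (length x) (length y)"
  by (simp add: vadd_def)

lemma vadd_vadd: "length x = length c \<Longrightarrow> vadd (vadd x c) c = x"
proof (induction x arbitrary: c)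
  case Nil then show ?case by (simp add: vadd_def)
next
  case (Cons a x) then show ?case by (cases c) (auto simp: vadd_def)
qed

lemma vadd_comm: "vadd x y = vadd y x"
proof (induction x arbitrary: y)
  case Nil then show ?case by (simp add: vadd_def)
next
  case (Cons a x) then show ?case by (cases y) (auto simp: vadd_def)
qed

lemma vadd_F2n: "x \<in> F2n n \<Longrightarrow> y \<in> F2n n \<Longrightarrow> vadd x y \<in> F2n n"
  by (simp add: F2n_def)

lemma bij_vadd: "c \<in> F2n n \<Longrightarrow> bij_betw (\<lambda>x. vadd x c) (F2n n) (F2n n)"
  apply (rule bij_betw_byWitness[where f'="\<lambda>x. vadd x c"])
  by (auto simp: F2n_def intro: vadd_vadd)

lemma sum_shift: "c \<in> F2n n \<Longrightarrow> (\<Sum>x\<in>F2n n. f (vadd x c)) = (\<Sum>x\<in>F2n n. f x)"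
  using sum.reindex_bij_betw[OF bij_vadd, of c n f] by simp

lemma conv_eq:
  assumes "C0 \<subseteq> F2n n" "x \<in> F2n n"
  shows "conv n (unif_code C0) \<rho> x = (\<Sum>c\<in>C0. \<rho> (vadd x c)) / real (card C0)"
proof -
  have "conv n (unif_code C0) \<rho> x = (\<Sum>y\<in>F2n n. (if y \<in> C0 then \<rho> (vadd x y) / real (card C0) else 0))"
    unfolding conv_def unif_code_def by (rule sum.cong) auto
  also have "\<dots> = (\<Sum>y\<in>C0. \<rho> (vadd x y) / real (card C0))"
    using assms(1) finite_F2n by (simp add: sum.If_cases Int_absorb1)
  finally show ?thesis by (simp add: sum_divide_distrib)
qed

lemma key:
  assumes C: "C0 \<subseteq> F2n n" "C0 \<noteq> {}" and E: "E \<subseteq> F2n n"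
    and p: "is_pmf n \<rho>"
    and tv: "dTV n (conv n (unif_code C0) \<rho>) (unif n) \<le> \<epsilon>"
  shows "(\<Sum>x\<in>E. \<rho> x) \<le> real (card C0) * real (card E) / 2 ^ n + \<epsilon>"
proof -
  define P where "P = conv n (unif_code C0) \<rho>"
  define A where "A = (\<lambda>(c,e). vadd c e) ` (C0 \<times> E)"
  have finC: "finite C0" using C finite_F2n finite_subset by blast
  have finE: "finite E" using E finite_F2n finite_subset by blast
  have cpos: "real (card C0) > 0" using finC C by (simp add: card_gt_0_iff)
  have AF: "A \<subseteq> F2n n" using C E by (force simp: A_def F2n_def subset_iff)
  have finA: "finite A" using AF finite_F2n finite_subset by blast
  have cardA: "card A \<le> card C0 * card E"
    unfolding A_def using card_image_le[of "C0 \<times> E"] finC finE by (metis card_cartesian_product finite_cartesian_product)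
  have rho0: "\<And>x. x \<in> F2n n \<Longrightarrow> \<rho> x \<ge> 0" using p by (simp add: is_pmf_def)
  have rho1: "(\<Sum>x\<in>F2n n. \<rho> x) = 1" using p by (simp add: is_pmf_def)
  have inner: "(\<Sum>x\<in>E. \<rho> x) \<le> (\<Sum>x\<in>A. \<rho> (vadd x c))" if cC: "c \<in> C0" for c
  proof -
    have cF: "c \<in> F2n n" using cC C by auto
    have inj: "inj_on (\<lambda>x. vadd x c) A"
      using bij_vadd[OF cF] AF bij_betw_imp_inj_on inj_on_subset by blast
    have m1: "(\<Sum>x\<in>A. \<rho> (vadd x c)) = (\<Sum>y\<in>(\<lambda>x. vadd x c) ` A. \<rho> y)"
      using sum.reindex[OF inj, of \<rho>] by (simp add: o_def)
    have m2: "E \<subseteq> (\<lambda>x. vadd x c) ` A"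
    proof
      fix e assume eE: "e \<in> E"
      have "vadd c e \<in> A" using cC eE by (auto simp: A_def)
      moreover have "vadd (vadd c e) c = e"
      proof -
        have "length e = length c" using eE E cF by (auto simp: F2n_def)
        thus ?thesis by (simp add: vadd_comm[of c e] vadd_vadd)
      qed
      ultimately show "e \<in> (\<lambda>x. vadd x c) ` A" by force
    qed
    have m3: "(\<lambda>x. vadd x c) ` A \<subseteq> F2n n" using AF cF vadd_F2n by blast
    show ?thesis
    proof -
      note * = m1 m2 m3
      have "(\<Sum>x\<in>E. \<rho> x) \<le> (\<Sum>y\<in>(\<lambda>x. vadd x c) ` A. \<rho> y)"
        apply (rule sum_mono2)
        using finA * rho0 by auto
      thus ?thesis using * by simp
    qed
  qed
  have PA: "(\<Sum>x\<in>A. P x) = (\<Sum>c\<in>C0. \<Sum>x\<in>A. \<rho> (vadd x c)) / real (card C0)"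
    using AF C by (simp add: P_def conv_eq subsetD sum_divide_distrib[symmetric] sum.swap[of _ A C0])
  have "real (card C0) * (\<Sum>x\<in>E. \<rho> x) = (\<Sum>c\<in>C0. \<Sum>x\<in>E. \<rho> x)" by simp
  also have "\<dots> \<le> (\<Sum>c\<in>C0. \<Sum>x\<in>A. \<rho> (vadd x c))" by (rule sum_mono) (rule inner)
  finally have low: "(\<Sum>x\<in>E. \<rho> x) \<le> (\<Sum>x\<in>A. P x)"
    unfolding PA using cpos by (simp add: field_simps)
  have PF: "(\<Sum>x\<in>F2n n. P x) = 1"
  proof -
    have "(\<Sum>x\<in>F2n n. P x) = (\<Sum>c\<in>C0. \<Sum>x\<in>F2n n. \<rho> (vadd x c)) / real (card C0)"
      using C by (simp add: P_def conv_eq sum_divide_distrib[symmetric] sum.swap[of _ "F2n n" C0])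
    also have "\<dots> = (\<Sum>c\<in>C0. 1) / real (card C0)"
      using C rho1 by (intro arg_cong[where f="\<lambda>z. z / _"] sum.cong) (auto simp: sum_shift subsetD)
    finally show ?thesis using cpos by simp
  qed
  have UF: "(\<Sum>x\<in>F2n n. unif n x) = 1" by (simp add: unif_def card_F2n)
  define D where "D x = P x - unif n x" for x
  have D0: "(\<Sum>x\<in>F2n n. D x) = 0" using PF UF by (simp add: D_def sum_subtractf)
  have split: "(\<Sum>x\<in>F2n n. D x) = (\<Sum>x\<in>A. D x) + (\<Sum>x\<in>F2n n - A. D x)"
    using AF finite_F2n by (metis add.commute sum.subset_diff)
  have splitabs: "(\<Sum>x\<in>F2n n. \<bar>D x\<bar>) = (\<Sum>x\<in>A. \<bar>D x\<bar>) + (\<Sum>x\<in>F2n n - A. \<bar>D x\<bar>)"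
    using AF finite_F2n by (metis add.commute sum.subset_diff)
  have a1: "(\<Sum>x\<in>A. D x) \<le> (\<Sum>x\<in>A. \<bar>D x\<bar>)" by (rule sum_mono) simp
  have a2: "- (\<Sum>x\<in>F2n n - A. D x) \<le> (\<Sum>x\<in>F2n n - A. \<bar>D x\<bar>)"
    by (simp add: sum_negf[symmetric] sum_mono)
  have "2 * (\<Sum>x\<in>A. D x) \<le> (\<Sum>x\<in>F2n n. \<bar>D x\<bar>)" using a1 a2 split splitabs D0 by linarith
  moreover have "dTV n P (unif n) = (1/2) * (\<Sum>x\<in>F2n n. \<bar>D x\<bar>)" by (simp add: dTV_def D_def)
  ultimately have DA: "(\<Sum>x\<in>A. D x) \<le> \<epsilon>" using tv P_def by simp
  have UA: "(\<Sum>x\<in>A. unif n x) = real (card A) / 2 ^ n" by (simp add: unif_def)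
  have "real (card A) / 2 ^ n \<le> real (card C0 * card E) / 2 ^ n"
  proof -
    have "real (card A) \<le> real (card C0 * card E)" using cardA by (rule of_nat_mono)
    thus ?thesis by (simp add: divide_right_mono)
  qed
  hence "(\<Sum>x\<in>A. P x) \<le> real (card C0) * real (card E) / 2 ^ n + \<epsilon>"
    using DA UA by (simp add: D_def sum_subtractf)
  thus ?thesis using low by linarith
qed


lemma card_ball: "card {x\<in>F2n n. hw x \<le> t} \<le> ball_vol n t"
proof -
  define f where "f x = {i. i < n \<and> x ! i}" for x :: "bool list"
  have inj: "inj_on f (F2n n)"
  proof
    fix x y assume x: "x \<in> F2n n" and y: "y \<in> F2n n" and e: "f x = f y"
    show "x = y"
    proof (rule nth_equalityI)
      show "length x = length y" using x y by (simp add: F2n_def)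
      fix i assume "i < length x"
      hence "i < n" using x by (simp add: F2n_def)
      thus "x ! i = y ! i" using e unfolding f_def by blast
    qed
  qed
  have hwf: "hw x = card (f x)" if "x \<in> F2n n" for x
    using that by (simp add: hw_def f_def length_filter_conv_card F2n_def)
  have sub: "f ` {x\<in>F2n n. hw x \<le> t} \<subseteq> (\<Union>j\<in>{..t}. {B. B \<subseteq> {0..<n} \<and> card B = j})"
    using hwf by (auto simp: f_def)
  have "card {x\<in>F2n n. hw x \<le> t} = card (f ` {x\<in>F2n n. hw x \<le> t})"
    by (rule card_image[symmetric]) (rule inj_on_subset[OF inj], auto)
  also have "\<dots> \<le> card (\<Union>j\<in>{..t}. {B. B \<subseteq> {0..<n} \<and> card B = j})"
    by (rule card_mono[OF _ sub]) auto
  also have "\<dots> \<le> (\<Sum>j\<in>{..t}. card {B. B \<subseteq> {0..<n} \<and> card B = j})"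
    by (rule card_UN_le) simp
  also have "\<dots> = ball_vol n t" by (simp add: ball_vol_def n_subsets)
  finally show ?thesis .
qed

lemma hw_not: "hw (map Not x) = length x - hw x"
proof -
  have "hw (map Not x) = length (filter Not x)" by (simp add: hw_def comp_def)
  moreover have "length (filter id x) + length (filter (\<lambda>b. \<not> id b) x) = length x"
    by (rule sum_length_filter_compl)
  ultimately show ?thesis by (simp add: hw_def)
qed

lemma card_anti: "card {x\<in>F2n n. hw x \<ge> n - t} \<le> card {x\<in>F2n n. hw x \<le> t}"
proof -
  have "{x\<in>F2n n. hw x \<ge> n - t} \<subseteq> map Not ` {x\<in>F2n n. hw x \<le> t}"
  proof
    fix x assume x: "x \<in> {x\<in>F2n n. hw x \<ge> n - t}"
    have "hw x \<le> length x" by (simp add: hw_def)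
    hence "map Not x \<in> {x\<in>F2n n. hw x \<le> t}" using x by (auto simp: F2n_def hw_not)
    moreover have "x = map Not (map Not x)" by (simp add: comp_def)
    ultimately show "x \<in> map Not ` {x\<in>F2n n. hw x \<le> t}" by blast
  qed
  hence "card {x\<in>F2n n. hw x \<ge> n - t} \<le> card (map Not ` {x\<in>F2n n. hw x \<le> t})"
    using finite_F2n by (intro card_mono) auto
  also have "\<dots> \<le> card {x\<in>F2n n. hw x \<le> t}" by (rule card_image_le) (simp add: finite_F2n)
  finally show ?thesis .
qed

theorem mainTheorem2:
  fixes n :: nat and C0 :: "bool list set" and d t :: nat and \<epsilon> :: real
    and \<rho> :: "bool list \<Rightarrow> real"
  assumes "C0 \<subseteq> F2n n" and "card C0 \<ge> 2"
    and "d = min_dist C0" and "t = (d - 1) div 2" and "\<epsilon> > 0"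
    and "is_pmf n \<rho>"
    and "dTV n (conv n (unif_code C0) \<rho>) (unif n) \<le> \<epsilon>"
  shows "(\<Sum>x\<in>{x\<in>F2n n. hw x \<le> t}. \<rho> x) \<le> real (card C0) * real (ball_vol n t) / 2 ^ n + \<epsilon>
    \<and> (\<Sum>x\<in>{x\<in>F2n n. hw x \<ge> n - t}. \<rho> x) \<le> real (card C0) * real (ball_vol n t) / 2 ^ n + \<epsilon>"
proof -
  have C: "C0 \<noteq> {}" using assms(2) by auto
  have gen: "(\<Sum>x\<in>E. \<rho> x) \<le> real (card C0) * real (ball_vol n t) / 2 ^ n + \<epsilon>"
    if E: "E \<subseteq> F2n n" "card E \<le> ball_vol n t" for E
  proof -
    have "real (card C0) * real (card E) \<le> real (card C0) * real (ball_vol n t)"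
      using E(2) by (intro mult_left_mono) auto
    hence "real (card C0) * real (card E) / 2 ^ n \<le> real (card C0) * real (ball_vol n t) / 2 ^ n"
      by (simp add: divide_right_mono)
    thus ?thesis using key[OF assms(1) C E(1) assms(6) assms(7)] by linarith
  qed
  show ?thesis
  proof
    show "(\<Sum>x\<in>{x\<in>F2n n. hw x \<le> t}. \<rho> x) \<le> real (card C0) * real (ball_vol n t) / 2 ^ n + \<epsilon>"
      by (rule gen) (auto simp: card_ball)
    show "(\<Sum>x\<in>{x\<in>F2n n. hw x \<ge> n - t}. \<rho> x) \<le> real (card C0) * real (ball_vol n t) / 2 ^ n + \<epsilon>"
      by (rule gen) (auto intro: le_trans[OF card_anti card_ball])
  qed
qed

end
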